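(* A set $A\subseteq2^\omega$ is $\mathcal T$-clopen (i.e. $A$ is measurable, $\Phi(A)=A$ and $\Phi(2^\omega\setminus A)=2^\omega\setminus A$) if and only if $A=\Phi(B)$ for some dualistic measurable $B$, if and only if $A\in\mathrm{ran}(\Phi)$ and $A$ is dualistic. Moreover the family of $\mathcal T$-clopen sets is a proper subfamily of $\{\Phi(B): B\text{ measurable}\}\cap\boldsymbol{\Delta}^0_2$.
   Context: $2^\omega$ is the Cantor space; $N_s=\{x:s\subset x\}$; $\mu$ the coin-tossing measure with $\mu(N_s)=2^{-\mathrm{lh}(s)}$. For measurable $A$ and $x$, $\mathcal D_A(x)=\lim_n\mu(A\cap N_{x\restriction n})/\mu(N_{x\restriction n})$ when it exists; $\Phi(A)=\{x:\mathcal D_A(x)=1\}$; $\mathrm{ran}(\Phi)=\{\Phi(B):B\text{ measurable}\}$. A measurable $B$ is dualistic if $\mathcal D_B(x)$ exists and belongs to $\{0,1\}$ for every $x$. $\boldsymbol{\Delta}^0_2$: sets both $F_\sigma$ and $G_\delta$. *)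

theory Defs
  imports "HOL-Probability.Probability"
begin

text \<open>Cantor space is modelled as the type nat \<Rightarrow> bool (with its product topology,
  the library's topology instance for function spaces).  The coin-tossing measure is the
  infinite product of fair Bernoulli measures; "measurable" means measurable for its
  completion (Lebesgue measurability).\<close>

definition coin_base :: "(nat \<Rightarrow> bool) measure" where
  "coin_base = (\<Pi>\<^sub>M i\<in>UNIV. measure_pmf (bernoulli_pmf (1/2)))"

definition mu :: "(nat \<Rightarrow> bool) measure" where
  "mu = completion coin_base"

definition cyl :: "(nat \<Rightarrow> bool) \<Rightarrow> nat \<Rightarrow> (nat \<Rightarrow> bool) set" where
  "cyl x n = {y. \<forall>i<n. y i = x i}"

definition dens_seq :: "(nat \<Rightarrow> bool) set \<Rightarrow> (nat \<Rightarrow> bool) \<Rightarrow> nat \<Rightarrow> real" where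
  "dens_seq A x n = measure mu (A \<inter> cyl x n) / measure mu (cyl x n)"

definition has_density :: "(nat \<Rightarrow> bool) set \<Rightarrow> (nat \<Rightarrow> bool) \<Rightarrow> real \<Rightarrow> bool" where
  "has_density A x d \<longleftrightarrow> dens_seq A x \<longlonglongrightarrow> d"

definition Phi :: "(nat \<Rightarrow> bool) set \<Rightarrow> (nat \<Rightarrow> bool) set" where
  "Phi A = {x. has_density A x 1}"

definition ran_Phi :: "(nat \<Rightarrow> bool) set set" where
  "ran_Phi = {Phi B | B. B \<in> sets mu}"

definition dualistic :: "(nat \<Rightarrow> bool) set \<Rightarrow> bool" where
  "dualistic B \<longleftrightarrow> B \<in> sets mu \<and> (\<forall>x. \<exists>d. has_density B x d \<and> d \<in> {0, 1})"

definition T_clopen :: "(nat \<Rightarrow> bool) set \<Rightarrow> bool" where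
  "T_clopen A \<longleftrightarrow> A \<in> sets mu \<and> Phi A = A \<and> Phi (- A) = - A"

definition Delta02 :: "(nat \<Rightarrow> bool) set \<Rightarrow> bool" where
  "Delta02 A \<longleftrightarrow> fsigma_in euclidean A \<and> gdelta_in euclidean A"

end

theory Submission
  imports Defs
begin

lemma space_cb[simp]: "space coin_base = UNIV"
  by (simp add: coin_base_def space_PiM)

lemma space_mu[simp]: "space mu = UNIV"
  by (simp add: mu_def)

lemma prob_cb: "prob_space coin_base"
  unfolding coin_base_def by (intro prob_space_PiM prob_space_measure_pmf)

lemma prob_mu: "prob_space mu"
  unfolding mu_def by (rule prob_space.prob_space_completion[OF prob_cb])

lemma sets_cb_mu: "A \<in> sets coin_base \<Longrightarrow> A \<in> sets mu"
  by (simp add: mu_def)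

lemma cyl_sets_cb: "cyl x n \<in> sets coin_base"
proof -
  have "Measurable.pred coin_base (\<lambda>y. \<forall>i\<in>{..<n}. y i = x i)"
    unfolding coin_base_def by measurable
  moreover have "{y. \<forall>i<n. y i = x i} = {y. \<forall>i\<in>{..<n}. y i = x i}" by auto
  ultimately show ?thesis unfolding cyl_def pred_def by simp
qed

lemma cyl_emb: "cyl x n = prod_emb UNIV (\<lambda>_. measure_pmf (bernoulli_pmf (1/2))) {..<n} (PiE {..<n} (\<lambda>i. {x i}))"
  by (auto simp: cyl_def prod_emb_def PiE_def extensional_def restrict_def)

lemma cyl_emeasure_cb: "emeasure coin_base (cyl x n) = ennreal ((1/2)^n)"
proof -
  have "emeasure coin_base (cyl x n) = (\<Prod>i\<in>{..<n}. emeasure (measure_pmf (bernoulli_pmf (1/2))) {x i})"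
    unfolding cyl_emb coin_base_def
    by (intro emeasure_PiM_emb prob_space_measure_pmf) auto
  also have "\<dots> = (\<Prod>i\<in>{..<n}. ennreal (1/2))"
    by (intro prod.cong refl) (auto simp: emeasure_pmf_single)
  also have "\<dots> = ennreal (1/2) ^ n" by (simp only: prod_constant card_lessThan)
  also have "\<dots> = ennreal ((1/2)^n)" by (rule ennreal_power) simp
  finally show ?thesis .
qed

lemma cyl_measure: "measure mu (cyl x n) = (1/2)^n"
  using cyl_emeasure_cb[of x n] cyl_sets_cb[of x n]
  by (simp add: mu_def measure_def)


interpretation mu: prob_space mu by (rule prob_mu)
interpretation cb: prob_space coin_base by (rule prob_cb)

lemma cyl_sets[measurable]: "cyl x n \<in> sets mu"
  by (rule sets_cb_mu[OF cyl_sets_cb])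

lemma cyl_pos: "measure mu (cyl x n) > 0"
  by (simp add: cyl_measure)

lemma cyl_self[simp]: "x \<in> cyl x n"
  by (simp add: cyl_def)

lemma cyl_mono: "n \<le> m \<Longrightarrow> cyl x m \<subseteq> cyl x n"
  by (auto simp: cyl_def)

lemma cyl_eq: "y \<in> cyl x n \<Longrightarrow> cyl y n = cyl x n"
  by (auto simp: cyl_def)

lemma cyl_eq': "\<forall>i<n. x i = y i \<Longrightarrow> cyl y n = cyl x n"
  by (auto simp: cyl_def)

lemma cyl_disj: "cyl x n \<inter> cyl y n \<noteq> {} \<Longrightarrow> cyl x n = cyl y n"
  by (auto simp: cyl_def)

definition fin_dep :: "nat \<Rightarrow> (nat \<Rightarrow> bool) set \<Rightarrow> bool" where
  "fin_dep n K \<longleftrightarrow> (\<forall>x y. (\<forall>i<n. x i = y i) \<longrightarrow> (x \<in> K \<longleftrightarrow> y \<in> K))"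

lemma fin_dep_mono: "fin_dep n K \<Longrightarrow> n \<le> m \<Longrightarrow> fin_dep m K"
  by (auto simp: fin_dep_def)

lemma fin_dep_compl: "fin_dep n K \<Longrightarrow> fin_dep n (- K)"
  by (auto simp: fin_dep_def)

lemma fin_dep_UN: "(\<And>k. k \<in> I \<Longrightarrow> fin_dep n (K k)) \<Longrightarrow> fin_dep n (\<Union>k\<in>I. K k)"
  unfolding fin_dep_def by blast

lemma fin_dep_empty: "fin_dep n {}"
  by (auto simp: fin_dep_def)

lemma fin_dep_cyl_sub: "fin_dep n K \<Longrightarrow> x \<in> K \<Longrightarrow> n \<le> m \<Longrightarrow> cyl x m \<subseteq> K"
proof
  fix y assume "fin_dep n K" "x \<in> K" "n \<le> m" "y \<in> cyl x m"
  then have "\<forall>i<n. x i = y i" by (auto simp: cyl_def)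
  then show "y \<in> K" using \<open>fin_dep n K\<close> \<open>x \<in> K\<close> unfolding fin_dep_def by blast
qed

lemma fin_dep_cyl_disj: "fin_dep n K \<Longrightarrow> x \<notin> K \<Longrightarrow> n \<le> m \<Longrightarrow> cyl x m \<inter> K = {}"
proof -
  assume a: "fin_dep n K" "x \<notin> K" "n \<le> m"
  { fix y assume "y \<in> cyl x m" "y \<in> K"
    then have "\<forall>i<n. x i = y i" using a by (auto simp: cyl_def)
    then have False using a \<open>y \<in> K\<close> unfolding fin_dep_def by blast }
  then show ?thesis by blast
qed

lemma finite_cyls: "finite ((\<lambda>x. cyl x n) ` A)"
proof -
  have "(\<lambda>x. cyl x n) ` A \<subseteq> (\<lambda>l. {y. \<forall>i<n. y i = l ! i}) ` {xs. set xs \<subseteq> UNIV \<and> length xs = n}"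
  proof
    fix c assume "c \<in> (\<lambda>x. cyl x n) ` A"
    then obtain x where "c = cyl x n" by auto
    then show "c \<in> (\<lambda>l. {y. \<forall>i<n. y i = l ! i}) ` {xs. set xs \<subseteq> UNIV \<and> length xs = n}"
      by (intro image_eqI[where x="map x [0..<n]"]) (auto simp: cyl_def)
  qed
  moreover have "finite {xs. set xs \<subseteq> (UNIV::bool set) \<and> length xs = n}"
    by (rule finite_lists_length_eq) simp
  ultimately show ?thesis by (meson finite_surj)
qed

lemma fin_dep_Union: "fin_dep n K \<Longrightarrow> K = (\<Union>x\<in>K. cyl x n)"
  using fin_dep_cyl_sub[of n K _ n] by auto

lemma fin_dep_sets_cb: "fin_dep n K \<Longrightarrow> K \<in> sets coin_base"
proof -
  assume K: "fin_dep n K"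
  have "(\<Union>c\<in>(\<lambda>x. cyl x n) ` K. c) \<in> sets coin_base"
    using finite_cyls cyl_sets_cb by (intro sets.finite_UN) auto
  then show ?thesis using fin_dep_Union[OF K] by simp
qed

lemma fin_dep_sets: "fin_dep n K \<Longrightarrow> K \<in> sets mu"
  by (rule sets_cb_mu[OF fin_dep_sets_cb])

lemma dens_compl: "S \<in> sets mu \<Longrightarrow> dens_seq (- S) x n = 1 - dens_seq S x n"
proof -
  assume S: "S \<in> sets mu"
  have "- S \<inter> cyl x n = cyl x n - (S \<inter> cyl x n)" by auto
  then have "measure mu (- S \<inter> cyl x n) = measure mu (cyl x n) - measure mu (S \<inter> cyl x n)"
    using S by (simp add: mu.finite_measure_Diff)
  then show ?thesis using cyl_pos[of x n] by (simp add: dens_seq_def field_simps)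
qed

lemma dens_nonneg: "dens_seq S x n \<ge> 0"
  by (simp add: dens_seq_def)

lemma dens_le1: "dens_seq S x n \<le> 1"
proof -
  have "measure mu (S \<inter> cyl x n) \<le> measure mu (cyl x n)"
    by (rule mu.finite_measure_mono_AE) auto
  then show ?thesis using cyl_pos[of x n] by (simp add: dens_seq_def)
qed

lemma dens_fin_dep: "fin_dep n K \<Longrightarrow> n \<le> m \<Longrightarrow> dens_seq K x m = (if x \<in> K then 1 else 0)"
proof -
  assume K: "fin_dep n K" "n \<le> m"
  show ?thesis
  proof (cases "x \<in> K")
    case True
    then have "K \<inter> cyl x m = cyl x m" using fin_dep_cyl_sub[OF K(1) True K(2)] by auto
    then show ?thesis using True cyl_pos[of x m] by (simp add: dens_seq_def)
  next
    case False
    then have "K \<inter> cyl x m = {}" using fin_dep_cyl_disj[OF K(1) False K(2)] by auto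
    then show ?thesis using False by (simp add: dens_seq_def)
  qed
qed

lemma dens_local: "\<forall>i<n. x i = y i \<Longrightarrow> dens_seq S x n = dens_seq S y n"
  unfolding dens_seq_def using cyl_eq'[of n x y] by simp

lemma dens_null_eq:
  assumes "S \<in> sets mu" "T \<in> sets mu" "(S - T) \<union> (T - S) \<in> null_sets mu"
  shows "dens_seq S x n = dens_seq T x n"
proof -
  have "AE y in mu. y \<in> S \<inter> cyl x n \<longleftrightarrow> y \<in> T \<inter> cyl x n"
    by (rule AE_I'[OF assms(3)]) auto
  then have "measure mu (S \<inter> cyl x n) = measure mu (T \<inter> cyl x n)"
    using assms by (intro measure_eq_AE) auto
  then show ?thesis by (simp add: dens_seq_def)
qed


lemma sets_cb_sigma: "sets coin_base = sigma_sets UNIV {{f. f i \<in> B} | i B. True}"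
proof -
  have "(\<Pi>\<^sub>E i\<in>(UNIV::nat set). space (measure_pmf (bernoulli_pmf (1/2)))) = UNIV"
    by (auto simp: PiE_def extensional_def)
  then show ?thesis unfolding coin_base_def sets_PiM_single by simp
qed

definition approxable :: "(nat \<Rightarrow> bool) set \<Rightarrow> bool" where
  "approxable A \<longleftrightarrow> (\<forall>e>0. \<exists>n K. fin_dep n K \<and> measure coin_base ((A - K) \<union> (K - A)) < e)"

lemma approx_cb:
  assumes "A \<in> sets coin_base"
  shows "approxable A"
proof -
  from assms have "A \<in> sigma_sets UNIV {{f. f i \<in> B} | i B. True}" by (simp add: sets_cb_sigma)
  then show ?thesis
  proof induct
    case (Basic a)
    then obtain i B where a: "a = {f. f i \<in> B}" by auto
    have "fin_dep (Suc i) a" unfolding a fin_dep_def by auto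
    then show ?case unfolding approxable_def by force
  next
    case Empty
    show ?case unfolding approxable_def using fin_dep_empty by force
  next
    case (Compl a)
    show ?case unfolding approxable_def
    proof (intro allI impI)
      fix e :: real assume "e > 0"
      then obtain n K where K: "fin_dep n K" "measure coin_base ((a - K) \<union> (K - a)) < e"
        using Compl(2) unfolding approxable_def by blast
      have "((UNIV - a) - (- K)) \<union> ((- K) - (UNIV - a)) = (a - K) \<union> (K - a)" by auto
      then show "\<exists>n K. fin_dep n K \<and> measure coin_base ((UNIV - a - K) \<union> (K - (UNIV - a))) < e"
        using K fin_dep_compl[OF K(1)] by metis
    qed
  next
    case (Union A)
    have As: "A i \<in> sets coin_base" for i using Union(1) by (simp add: sets_cb_sigma)
    show ?case unfolding approxable_def
    proof (intro allI impI)
      fix e :: real assume e: "e > 0"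
      define B where "B m = (\<Union>k<m. A k)" for m
      have Bs: "B m \<in> sets coin_base" for m unfolding B_def using As by auto
      have "(\<lambda>m. measure coin_base (B m)) \<longlonglongrightarrow> measure coin_base (\<Union>m. B m)"
      proof (rule cb.finite_Lim_measure_incseq)
        show "range B \<subseteq> cb.events" using Bs by auto
        show "incseq B" unfolding B_def incseq_def by (intro allI impI UN_mono) auto
      qed
      moreover have UB: "(\<Union>m. B m) = (\<Union>i. A i)" unfolding B_def by auto
      ultimately have "(\<lambda>m. measure coin_base (B m)) \<longlonglongrightarrow> measure coin_base (\<Union>i. A i)" by simp
      then have "eventually (\<lambda>m. measure coin_base (\<Union>i. A i) - e/2 < measure coin_base (B m)) sequentially"
        using e by (intro order_tendstoD(1)) auto
      then obtain m where m: "measure coin_base (\<Union>i. A i) - e/2 < measure coin_base (B m)"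
        by (auto simp: eventually_sequentially)
      have "B m \<subseteq> (\<Union>i. A i)" unfolding B_def by auto
      then have m2: "measure coin_base ((\<Union>i. A i) - B m) < e/2"
        using m As Bs by (subst cb.finite_measure_Diff) auto
      have "\<forall>k. \<exists>n K. fin_dep n K \<and> measure coin_base ((A k - K) \<union> (K - A k)) < e / (2 * (m + 1))"
        using Union(2) e unfolding approxable_def by simp
      then obtain nn KK where KK: "\<And>k. fin_dep (nn k) (KK k)"
        "\<And>k. measure coin_base ((A k - KK k) \<union> (KK k - A k)) < e / (2 * (m + 1))"
        by metis
      define K where "K = (\<Union>k<m. KK k)"
      define N where "N = (\<Sum>k<m. nn k)"
      have "fin_dep N K" unfolding K_def
      proof (rule fin_dep_UN)
        fix k assume "k \<in> {..<m}"
        then have "nn k \<le> N" unfolding N_def by (intro member_le_sum) auto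
        then show "fin_dep N (KK k)" using KK(1) fin_dep_mono by blast
      qed
      have KKs: "KK k \<in> sets coin_base" for k using fin_dep_sets_cb[OF KK(1)] .
      have sub: "((\<Union>i. A i) - K) \<union> (K - (\<Union>i. A i)) \<subseteq>
          ((\<Union>i. A i) - B m) \<union> (\<Union>k<m. (A k - KK k) \<union> (KK k - A k))"
        unfolding K_def B_def by blast
      have "measure coin_base (((\<Union>i. A i) - K) \<union> (K - (\<Union>i. A i))) \<le>
          measure coin_base (((\<Union>i. A i) - B m) \<union> (\<Union>k<m. (A k - KK k) \<union> (KK k - A k)))"
        using As Bs KKs by (intro cb.finite_measure_mono[OF sub]) auto
      also have "\<dots> \<le> measure coin_base ((\<Union>i. A i) - B m) + measure coin_base (\<Union>k<m. (A k - KK k) \<union> (KK k - A k))"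
        using As Bs KKs by (intro measure_Un_le) auto
      also have "measure coin_base (\<Union>k<m. (A k - KK k) \<union> (KK k - A k)) \<le> (\<Sum>k<m. measure coin_base ((A k - KK k) \<union> (KK k - A k)))"
        using As KKs by (intro measure_UNION_le) auto
      also have "\<dots> \<le> of_nat (card {..<m}) * (e / (2 * (m + 1)))"
        using KK(2) by (intro sum_bounded_above less_imp_le) auto
      also have "\<dots> \<le> e / 2"
        using e by (simp add: field_simps)
      finally have "measure coin_base (((\<Union>i. A i) - K) \<union> (K - (\<Union>i. A i))) < e"
        using m2 by linarith
      then show "\<exists>n K. fin_dep n K \<and> measure coin_base (((\<Union>i. A i) - K) \<union> (K - (\<Union>i. A i))) < e"
        using \<open>fin_dep N K\<close> by blast
    qed
  qed
qed

lemma approx_mu: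
  assumes "S \<in> sets mu" "e > 0"
  shows "\<exists>n K. fin_dep n K \<and> measure mu ((S - K) \<union> (K - S)) < e"
proof -
  obtain C D N where S: "S = C \<union> D" "D \<subseteq> N" "N \<in> null_sets coin_base" "C \<in> sets coin_base"
    using assms(1) unfolding mu_def by (rule sets_completionE)
  obtain n K where K: "fin_dep n K" "measure coin_base ((C - K) \<union> (K - C)) < e"
    using approx_cb[OF S(4)] assms(2) unfolding approxable_def by blast
  have Ks: "K \<in> sets coin_base" by (rule fin_dep_sets_cb[OF K(1)])
  have Nm: "N \<in> sets coin_base" "measure coin_base N = 0" using S(3) by (auto simp: measure_def)
  have "(S - K) \<union> (K - S) \<subseteq> ((C - K) \<union> (K - C)) \<union> N" using S by blast
  then have "measure mu ((S - K) \<union> (K - S)) \<le> measure mu (((C - K) \<union> (K - C)) \<union> N)"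
    using assms(1) Ks S(4) Nm by (intro mu.finite_measure_mono) (auto intro: sets_cb_mu)
  also have "\<dots> = measure coin_base (((C - K) \<union> (K - C)) \<union> N)"
    unfolding mu_def using Ks S(4) Nm by (intro measure_completion) auto
  also have "\<dots> \<le> measure coin_base ((C - K) \<union> (K - C)) + measure coin_base N"
    using Ks S(4) Nm by (intro measure_Un_le) auto
  finally have "measure mu ((S - K) \<union> (K - S)) < e" using K Nm by linarith
  then show ?thesis using K(1) by blast
qed


lemma fin_dep_ineq:
  assumes S: "S \<in> sets mu" and G: "fin_dep n G"
    and ineq: "\<And>x. x \<in> G \<Longrightarrow> d * measure mu (cyl x n) \<le> measure mu (S \<inter> cyl x n)"
  shows "d * measure mu G \<le> measure mu (S \<inter> G)"
proof -
  define C where "C = (\<lambda>x. cyl x n) ` G"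
  have fin: "finite C" unfolding C_def by (rule finite_cyls)
  have GU: "G = (\<Union>c\<in>C. c)" unfolding C_def using fin_dep_Union[OF G] by simp
  have disj: "disjoint_family_on (\<lambda>c. c) C"
    unfolding disjoint_family_on_def C_def using cyl_disj by blast
  have disj2: "disjoint_family_on (\<lambda>c. S \<inter> c) C"
    unfolding disjoint_family_on_def C_def using cyl_disj by blast
  have Cs: "(\<lambda>c. c) ` C \<subseteq> sets mu" unfolding C_def by auto
  have m1: "measure mu G = (\<Sum>c\<in>C. measure mu c)"
    unfolding GU using fin Cs disj by (intro measure_finite_Union) (auto simp: mu.emeasure_finite)
  have "S \<inter> G = (\<Union>c\<in>C. S \<inter> c)" unfolding GU by auto
  moreover have "measure mu (\<Union>c\<in>C. S \<inter> c) = (\<Sum>c\<in>C. measure mu (S \<inter> c))"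
    using fin Cs disj2 S by (intro measure_finite_Union) (auto simp: mu.emeasure_finite)
  ultimately have m2: "measure mu (S \<inter> G) = (\<Sum>c\<in>C. measure mu (S \<inter> c))" by simp
  have "d * measure mu G = (\<Sum>c\<in>C. d * measure mu c)" unfolding m1 by (simp add: sum_distrib_left)
  also have "\<dots> \<le> (\<Sum>c\<in>C. measure mu (S \<inter> c))"
    by (intro sum_mono) (auto simp: C_def ineq)
  finally show ?thesis unfolding m2 .
qed

lemma null_of_small:
  assumes "\<And>e. e > 0 \<Longrightarrow> \<exists>W\<in>sets mu. E \<subseteq> W \<and> measure mu W < e"
  shows "E \<in> null_sets mu"
proof -
  have "\<forall>j::nat. \<exists>W\<in>sets mu. E \<subseteq> W \<and> measure mu W < inverse (real (Suc j))"
    using assms by simp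
  then obtain W where W: "\<And>j. W j \<in> sets mu" "\<And>j. E \<subseteq> W j" "\<And>j. measure mu (W j) < inverse (real (Suc j))"
    by metis
  define V where "V = (\<Inter>j. W j)"
  have Vs: "V \<in> sets mu" unfolding V_def using W(1) by auto
  have "measure mu V \<le> 0"
  proof (rule ccontr)
    assume "\<not> measure mu V \<le> 0"
    then obtain j where j: "inverse (real (Suc j)) < measure mu V"
      using reals_Archimedean[of "measure mu V"] by force
    have "measure mu V \<le> measure mu (W j)" unfolding V_def
      using W(1) by (intro mu.finite_measure_mono) auto
    then show False using W(3)[of j] j by linarith
  qed
  then have "measure mu V = 0" by (simp add: measure_nonneg antisym)
  then have "V \<in> null_sets mu" using Vs by (simp add: mu.emeasure_eq_measure null_sets_def)
  moreover have "E \<subseteq> V" unfolding V_def using W(2) by auto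
  ultimately show ?thesis unfolding mu_def using null_sets_completion_subset by blast
qed

lemma null_cover:
  assumes S: "S \<in> sets mu" and d: "d > 0" and ES: "E \<subseteq> - S"
    and hyp: "\<And>x m. x \<in> E \<Longrightarrow> \<exists>n\<ge>m. d * measure mu (cyl x n) \<le> measure mu (S \<inter> cyl x n)"
  shows "E \<in> null_sets mu"
proof (rule null_of_small)
  fix e :: real assume e: "e > 0"
  obtain N K where K: "fin_dep N K" "measure mu ((S - K) \<union> (K - S)) < min (e * d / 2) (e / 2)"
    using approx_mu[OF S, of "min (e * d / 2) (e / 2)"] e d by auto
  have Ks: "K \<in> sets mu" by (rule fin_dep_sets[OF K(1)])
  have SK1: "measure mu (S - K) < e * d / 2"
  proof -
    have "measure mu (S - K) \<le> measure mu ((S - K) \<union> (K - S))"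
      using S Ks by (intro mu.finite_measure_mono) auto
    then show ?thesis using K(2) by linarith
  qed
  have SK2: "measure mu (K - S) < e / 2"
  proof -
    have "measure mu (K - S) \<le> measure mu ((S - K) \<union> (K - S))"
      using S Ks by (intro mu.finite_measure_mono) auto
    then show ?thesis using K(2) by linarith
  qed
  define good where "good x n \<longleftrightarrow> N \<le> n \<and> d * measure mu (cyl x n) \<le> measure mu (S \<inter> cyl x n)" for x n
  define G where "G n = {x. x \<notin> K \<and> good x n \<and> (\<forall>m<n. \<not> good x m)}" for n
  have good_loc: "good x m = good y m" if "\<forall>i<n. x i = y i" "m \<le> n" for x y m n
  proof -
    have "cyl y m = cyl x m" using that by (intro cyl_eq') auto
    then show ?thesis unfolding good_def by simp
  qed
  have Gdep: "fin_dep n (G n)" for n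
  proof (cases "N \<le> n")
    case False
    then have "G n = {}" unfolding G_def good_def by auto
    then show ?thesis by (simp add: fin_dep_empty)
  next
    case True
    have Kn: "fin_dep n K" using fin_dep_mono[OF K(1) True] .
    show ?thesis unfolding fin_dep_def
    proof (intro allI impI)
      fix x y :: "nat \<Rightarrow> bool" assume xy: "\<forall>i<n. x i = y i"
      have "x \<in> K \<longleftrightarrow> y \<in> K" using Kn xy unfolding fin_dep_def by blast
      moreover have "good x m = good y m" if "m \<le> n" for m using good_loc[OF xy that] .
      ultimately show "x \<in> G n \<longleftrightarrow> y \<in> G n" unfolding G_def by auto
    qed
  qed
  have Gs: "G n \<in> sets mu" for n by (rule fin_dep_sets[OF Gdep])
  have Gdisj: "disjoint_family G"
    unfolding disjoint_family_on_def
  proof (intro ballI impI)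
    fix n m :: nat assume "n \<noteq> m"
    then have "n < m \<or> m < n" by arith
    then show "G n \<inter> G m = {}" unfolding G_def by blast
  qed
  have EK: "E - K \<subseteq> (\<Union>n. G n)"
  proof
    fix x assume x: "x \<in> E - K"
    then have ex: "\<exists>n. good x n" using hyp[of x N] unfolding good_def by auto
    define n0 where "n0 = (LEAST n. good x n)"
    have "good x n0" unfolding n0_def using ex by (rule LeastI_ex)
    moreover have "\<forall>m<n0. \<not> good x m" unfolding n0_def using not_less_Least by blast
    ultimately have "x \<in> G n0" using x unfolding G_def by auto
    then show "x \<in> (\<Union>n. G n)" by auto
  qed
  have ineq: "d * measure mu (G n) \<le> measure mu (S \<inter> G n)" for n
    using S Gdep by (rule fin_dep_ineq) (auto simp: G_def good_def)
  have sum1: "(\<lambda>n. measure mu (G n)) sums measure mu (\<Union>n. G n)"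
    using Gs Gdisj by (intro measure_UNION) (auto simp: mu.emeasure_finite)
  have disj2: "disjoint_family (\<lambda>n. S \<inter> G n)"
    using Gdisj unfolding disjoint_family_on_def by auto
  have sum2: "(\<lambda>n. measure mu (S \<inter> G n)) sums measure mu (\<Union>n. S \<inter> G n)"
    using Gs S disj2 by (intro measure_UNION) (auto simp: mu.emeasure_finite)
  have "d * measure mu (\<Union>n. G n) \<le> measure mu (\<Union>n. S \<inter> G n)"
    by (rule sums_le[OF _ sums_mult[OF sum1, of d] sum2]) (simp add: ineq)
  also have "\<dots> \<le> measure mu (S - K)"
    using S Ks Gs by (intro mu.finite_measure_mono) (auto simp: G_def)
  finally have "d * measure mu (\<Union>n. G n) < d * (e / 2)" using SK1 by (simp add: field_simps)
  then have UG: "measure mu (\<Union>n. G n) < e / 2" using d by simp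
  define W where "W = (\<Union>n. G n) \<union> (K - S)"
  have Ws: "W \<in> sets mu" unfolding W_def using Gs Ks S by auto
  have "E \<subseteq> W" unfolding W_def using EK ES by blast
  moreover have "measure mu W < e"
  proof -
    have "measure mu W \<le> measure mu (\<Union>n. G n) + measure mu (K - S)"
      unfolding W_def using Gs Ks S by (intro measure_Un_le) auto
    then show ?thesis using UG SK2 by linarith
  qed
  ultimately show "\<exists>W\<in>sets mu. E \<subseteq> W \<and> measure mu W < e" using Ws by blast
qed


lemma null_subset: "A \<subseteq> B \<Longrightarrow> B \<in> null_sets mu \<Longrightarrow> A \<in> null_sets mu"
  unfolding mu_def using null_sets_completion_subset by blast

lemma ev_gt: "f \<longlonglongrightarrow> (l::real) \<Longrightarrow> a < l \<Longrightarrow> \<exists>N. \<forall>n\<ge>N. a < f n"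
  using order_tendstoD(1) by (fastforce simp: eventually_sequentially)

lemma ev_lt: "f \<longlonglongrightarrow> (l::real) \<Longrightarrow> l < a \<Longrightarrow> \<exists>N. \<forall>n\<ge>N. f n < a"
  using order_tendstoD(2) by (fastforce simp: eventually_sequentially)

lemma Phi_minus_null:
  assumes C: "C \<in> sets mu"
  shows "Phi C - C \<in> null_sets mu"
proof (rule null_cover[OF C, of "1/2"])
  fix x m assume x: "x \<in> Phi C - C"
  then have "dens_seq C x \<longlonglongrightarrow> 1" by (simp add: Phi_def has_density_def)
  then obtain N where N: "\<forall>n\<ge>N. 1/2 < dens_seq C x n" using ev_gt[of _ 1 "1/2"] by auto
  have "1/2 < dens_seq C x (max m N)" using N by simp
  then have "1/2 * measure mu (cyl x (max m N)) \<le> measure mu (C \<inter> cyl x (max m N))"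
    using cyl_pos[of x "max m N"] by (simp add: dens_seq_def field_simps)
  then show "\<exists>n\<ge>m. 1/2 * measure mu (cyl x n) \<le> measure mu (C \<inter> cyl x n)"
    by (intro exI[of _ "max m N"]) auto
qed auto

lemma minus_Phi_null:
  assumes C: "C \<in> sets mu"
  shows "C - Phi C \<in> null_sets mu"
proof -
  define E where "E k = {x \<in> C. \<forall>m. \<exists>n\<ge>m. inverse (real (Suc k)) * measure mu (cyl x n) \<le> measure mu (- C \<inter> cyl x n)}" for k
  have "space mu - C \<in> sets mu" using C by (rule sets.compl_sets)
  then have CC: "- C \<in> sets mu" by (simp add: Compl_eq_Diff_UNIV)
  have "E k \<in> null_sets mu" for k
    by (rule null_cover[OF CC, of "inverse (real (Suc k))"]) (auto simp: E_def)
  then have "(\<Union>k. E k) \<in> null_sets mu" by (rule null_sets_UN)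
  moreover have "C - Phi C \<subseteq> (\<Union>k. E k)"
  proof
    fix x assume x: "x \<in> C - Phi C"
    then have "\<not> (dens_seq C x \<longlonglongrightarrow> 1)" by (simp add: Phi_def has_density_def)
    then obtain r where r: "r > 0" "\<forall>no. \<exists>n\<ge>no. \<not> dist (dens_seq C x n) 1 < r"
      unfolding lim_sequentially by blast
    obtain k where k: "inverse (real (Suc k)) < r" using reals_Archimedean[OF r(1)] by auto
    have "\<exists>n\<ge>m. inverse (real (Suc k)) * measure mu (cyl x n) \<le> measure mu (- C \<inter> cyl x n)" for m
    proof -
      obtain n where n: "n \<ge> m" "\<not> dist (dens_seq C x n) 1 < r" using r(2) by blast
      have "dist (dens_seq C x n) 1 = dens_seq (- C) x n"
        using dens_le1[of C x n] dens_compl[OF C, of x n] by (simp add: dist_real_def)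
      then have "r \<le> dens_seq (- C) x n" using n(2) by simp
      then have "inverse (real (Suc k)) \<le> measure mu (- C \<inter> cyl x n) / measure mu (cyl x n)"
        using k unfolding dens_seq_def by simp
      then show ?thesis using n(1) cyl_pos[of x n] by (intro exI[of _ n]) (simp add: field_simps)
    qed
    then have "x \<in> E k" using x unfolding E_def by auto
    then show "x \<in> (\<Union>k. E k)" by auto
  qed
  ultimately show ?thesis by (rule null_subset[rotated])
qed

lemma null_sets_sets: "N \<in> null_sets mu \<Longrightarrow> N \<in> sets mu"
  by (simp add: null_sets_def)

lemma Phi_sets: "C \<in> sets mu \<Longrightarrow> Phi C \<in> sets mu"
proof -
  assume C: "C \<in> sets mu"
  have "Phi C = (C - (C - Phi C)) \<union> (Phi C - C)" by auto
  then show ?thesis using C null_sets_sets[OF Phi_minus_null[OF C]] null_sets_sets[OF minus_Phi_null[OF C]]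
    by (metis sets.Diff sets.Un)
qed

lemma Phi_dens: "C \<in> sets mu \<Longrightarrow> dens_seq (Phi C) = dens_seq C"
proof -
  assume C: "C \<in> sets mu"
  have "(Phi C - C) \<union> (C - Phi C) \<in> null_sets mu"
    using Phi_minus_null[OF C] minus_Phi_null[OF C] by (rule null_sets.Un)
  then show ?thesis using C Phi_sets[OF C] by (intro ext dens_null_eq) auto
qed

lemma Phi_cong: "dens_seq A = dens_seq B \<Longrightarrow> Phi A = Phi B"
  by (simp add: Phi_def has_density_def)

lemma Phi_idem: "C \<in> sets mu \<Longrightarrow> Phi (Phi C) = Phi C"
  by (rule Phi_cong[OF Phi_dens])

lemma one_minus_lim: "((\<lambda>n. 1 - f n) \<longlonglongrightarrow> (1::real)) \<longleftrightarrow> (f \<longlonglongrightarrow> 0)"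
proof
  assume "(\<lambda>n. 1 - f n) \<longlonglongrightarrow> (1::real)"
  from tendsto_diff[OF tendsto_const[of 1] this] show "f \<longlonglongrightarrow> 0" by simp
next
  assume "f \<longlonglongrightarrow> 0"
  from tendsto_diff[OF tendsto_const[of 1] this] show "(\<lambda>n. 1 - f n) \<longlonglongrightarrow> (1::real)" by simp
qed

lemma dens_compl_fun: "S \<in> sets mu \<Longrightarrow> dens_seq (- S) x = (\<lambda>n. 1 - dens_seq S x n)"
  by (rule ext) (rule dens_compl)

lemma Tc_dual: "T_clopen A \<Longrightarrow> dualistic A \<and> A = Phi A"
proof -
  assume T: "T_clopen A"
  then have A: "A \<in> sets mu" "Phi A = A" "Phi (- A) = - A" by (auto simp: T_clopen_def)
  have "\<exists>d. has_density A x d \<and> d \<in> {0, 1}" for x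
  proof (cases "x \<in> A")
    case True
    then have "has_density A x 1" using A(2) by (auto simp: Phi_def)
    then show ?thesis by auto
  next
    case False
    then have "x \<in> Phi (- A)" using A(3) by auto
    then have "dens_seq A x \<longlonglongrightarrow> 0"
      by (simp add: Phi_def has_density_def dens_compl_fun[OF A(1)] one_minus_lim)
    then show ?thesis by (auto simp: has_density_def)
  qed
  then show ?thesis using A by (auto simp: dualistic_def)
qed

lemma dual_Phi: "dualistic B \<Longrightarrow> dualistic (Phi B)"
proof -
  assume D: "dualistic B"
  then have B: "B \<in> sets mu" by (simp add: dualistic_def)
  have e: "dens_seq (Phi B) = dens_seq B" by (rule Phi_dens[OF B])
  show ?thesis using D Phi_sets[OF B] unfolding dualistic_def has_density_def e by blast
qed

lemma dual_Tc: "dualistic B \<Longrightarrow> T_clopen (Phi B)"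
proof -
  assume D: "dualistic B"
  then have B: "B \<in> sets mu" by (simp add: dualistic_def)
  have PB: "Phi B \<in> sets mu" by (rule Phi_sets[OF B])
  have "Phi (- Phi B) = - Phi B"
  proof (rule set_eqI)
    fix x
    obtain d where d: "dens_seq B x \<longlonglongrightarrow> d" "d \<in> {0, 1}"
      using D unfolding dualistic_def has_density_def by blast
    have "x \<in> Phi (- Phi B) \<longleftrightarrow> dens_seq (- Phi B) x \<longlonglongrightarrow> 1"
      by (simp only: Phi_def[of "- Phi B"] has_density_def mem_Collect_eq)
    also have "dens_seq (- Phi B) x = (\<lambda>n. 1 - dens_seq B x n)"
      using dens_compl_fun[OF PB, of x] Phi_dens[OF B] by simp
    also have "(\<lambda>n. 1 - dens_seq B x n) \<longlonglongrightarrow> 1 \<longleftrightarrow> dens_seq B x \<longlonglongrightarrow> 0"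
      by (rule one_minus_lim)
    also have "\<dots> \<longleftrightarrow> \<not> dens_seq B x \<longlonglongrightarrow> 1"
    proof (cases "d = 0")
      case True
      then show ?thesis using d(1) LIMSEQ_unique[OF d(1), of 1] by auto
    next
      case False
      then have "d = 1" using d(2) by simp
      then show ?thesis using d(1) LIMSEQ_unique[OF d(1), of 0] by auto
    qed
    also have "\<dots> \<longleftrightarrow> x \<in> - Phi B" by (simp only: Phi_def[of B] has_density_def mem_Collect_eq Compl_iff)
    finally show "x \<in> Phi (- Phi B) \<longleftrightarrow> x \<in> - Phi B" .
  qed
  then show ?thesis using PB Phi_idem[OF B] unfolding T_clopen_def by blast
qed

lemma ranPhi_dual: "A \<in> ran_Phi \<Longrightarrow> dualistic A \<Longrightarrow> Phi A = A"
proof -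
  assume "A \<in> ran_Phi"
  then obtain C where C: "C \<in> sets mu" "A = Phi C" unfolding ran_Phi_def by blast
  have "Phi (Phi C) = Phi C" by (rule Phi_idem[OF C(1)])
  then show ?thesis unfolding C(2) .
qed

lemma part1:
  "(T_clopen A \<longleftrightarrow> (\<exists>B. dualistic B \<and> A = Phi B))
    \<and> ((\<exists>B. dualistic B \<and> A = Phi B) \<longleftrightarrow> (A \<in> ran_Phi \<and> dualistic A))"
proof -
  have 1: "T_clopen A \<longleftrightarrow> (\<exists>B. dualistic B \<and> A = Phi B)"
  proof
    assume "T_clopen A"
    then have "dualistic A \<and> A = Phi A" by (rule Tc_dual)
    then show "\<exists>B. dualistic B \<and> A = Phi B" by blast
  next
    assume "\<exists>B. dualistic B \<and> A = Phi B"
    then obtain B where "dualistic B" "A = Phi B" by blast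
    then show "T_clopen A" using dual_Tc by simp
  qed
  have 2: "(\<exists>B. dualistic B \<and> A = Phi B) \<Longrightarrow> A \<in> ran_Phi \<and> dualistic A"
  proof -
    assume "\<exists>B. dualistic B \<and> A = Phi B"
    then obtain B where B: "dualistic B" "A = Phi B" by blast
    then have "A \<in> ran_Phi" unfolding ran_Phi_def dualistic_def by blast
    then show "A \<in> ran_Phi \<and> dualistic A" using B dual_Phi by simp
  qed
  have 3: "A \<in> ran_Phi \<and> dualistic A \<Longrightarrow> \<exists>B. dualistic B \<and> A = Phi B"
  proof -
    assume h: "A \<in> ran_Phi \<and> dualistic A"
    then have "Phi A = A" using ranPhi_dual by blast
    then show ?thesis using h by (intro exI[of _ A]) simp
  qed
  have 4: "(\<exists>B. dualistic B \<and> A = Phi B) \<longleftrightarrow> (A \<in> ran_Phi \<and> dualistic A)"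
    using 2 3 by (rule iffI)
  show ?thesis using 1 4 by (rule conjI)
qed


lemma open_coord: "open ((\<lambda>y::nat \<Rightarrow> bool. y i) -` {b})"
proof -
  have "open ((\<lambda>y::nat \<Rightarrow> bool. y i) -` {b} \<inter> UNIV)"
    using continuous_on_open_vimage[of UNIV "\<lambda>y::nat \<Rightarrow> bool. y i"] continuous_on_product_coordinates[of i]
      discrete_topology_class.open_discrete[of "{b}"] by simp
  then show ?thesis by simp
qed

lemma open_cyl: "open (cyl x n)"
proof -
  have "cyl x n = (\<Inter>i\<in>{..<n}. (\<lambda>y. y i) -` {x i})" by (auto simp: cyl_def)
  moreover have "open (\<Inter>i\<in>{..<n}. (\<lambda>y::nat \<Rightarrow> bool. y i) -` {x i})"
    by (intro open_INT) (auto simp: open_coord)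
  ultimately show ?thesis by simp
qed

lemma fin_dep_open: "fin_dep n K \<Longrightarrow> open K"
proof -
  assume K: "fin_dep n K"
  have "open (\<Union>x\<in>K. cyl x n)" by (intro open_UN) (auto simp: open_cyl)
  then show ?thesis using fin_dep_Union[OF K] by simp
qed

lemma fin_dep_closed: "fin_dep n K \<Longrightarrow> closed K"
  unfolding closed_def by (rule fin_dep_open[OF fin_dep_compl])

lemma fsigma_UN: fixes F :: "nat \<Rightarrow> (nat \<Rightarrow> bool) set" shows "(\<And>N. closed (F N)) \<Longrightarrow> fsigma_in euclidean (\<Union>N. F N)"
proof -
  assume c: "\<And>N. closed (F N)"
  show ?thesis
  proof (rule fsigma_in_Union)
    show "countable (range F)" by simp
  next
    fix S assume "S \<in> range F"
    then have "closed S" using c by auto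
    then show "fsigma_in euclidean S" by (rule closed_imp_fsigma_in[OF closed_closedin[THEN iffD1]])
  qed
qed

lemma dens_dep: "fin_dep n {x. P (dens_seq A x n)}"
  unfolding fin_dep_def
proof (intro allI impI)
  fix x y :: "nat \<Rightarrow> bool" assume "\<forall>i<n. x i = y i"
  then have "dens_seq A x n = dens_seq A y n" by (rule dens_local)
  then show "x \<in> {x. P (dens_seq A x n)} \<longleftrightarrow> y \<in> {x. P (dens_seq A x n)}" by simp
qed

lemma Tc_Delta: "T_clopen A \<Longrightarrow> Delta02 A"
proof -
  assume T: "T_clopen A"
  have DA: "dualistic A \<and> A = Phi A" by (rule Tc_dual[OF T])
  have D: "dualistic A" using DA by (rule conjunct1)
  have AP: "Phi A = A" using conjunct2[OF DA] by (rule sym)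
  define F where "F N = (\<Inter>n\<in>{N..}. {x. 1/2 < dens_seq A x n})" for N
  define H where "H N = (\<Inter>n\<in>{N..}. {x. dens_seq A x n < 1/2})" for N
  have Fc: "closed (F N)" for N unfolding F_def
    by (intro closed_INT ballI fin_dep_closed[OF dens_dep])
  have Hc: "closed (H N)" for N unfolding H_def
    by (intro closed_INT ballI fin_dep_closed[OF dens_dep])
  have disj: "x \<notin> F N \<or> x \<notin> H M" for x N M
  proof (rule ccontr)
    assume "\<not> (x \<notin> F N \<or> x \<notin> H M)"
    then have a: "x \<in> F N" "x \<in> H M" by auto
    from a(1) have "1/2 < dens_seq A x (max N M)" unfolding F_def by auto
    moreover from a(2) have "dens_seq A x (max N M) < 1/2" unfolding H_def by auto
    ultimately show False by simp
  qed
  have inF: "x \<in> (\<Union>N. F N)" if "x \<in> A" for x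
  proof -
    have "x \<in> Phi A" using that AP by simp
    then have "dens_seq A x \<longlonglongrightarrow> 1" by (simp add: Phi_def has_density_def)
    then obtain N where "\<forall>n\<ge>N. 1/2 < dens_seq A x n" using ev_gt[of _ 1 "1/2"] by auto
    then have "x \<in> F N" unfolding F_def by auto
    then show ?thesis by auto
  qed
  have inH: "x \<in> (\<Union>N. H N)" if "x \<notin> A" for x
  proof -
    obtain d where d: "dens_seq A x \<longlonglongrightarrow> d" "d \<in> {0, 1}"
      using D unfolding dualistic_def has_density_def by blast
    have "x \<notin> Phi A" using that AP by simp
    then have "d \<noteq> 1" using d(1) by (auto simp: Phi_def has_density_def)
    then have "dens_seq A x \<longlonglongrightarrow> 0" using d by auto
    then obtain N where "\<forall>n\<ge>N. dens_seq A x n < 1/2" using ev_lt[of _ 0 "1/2"] by auto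
    then have "x \<in> H N" unfolding H_def by auto
    then show ?thesis by auto
  qed
  have A1: "A = (\<Union>N. F N)" using inF inH disj by blast
  have A2: "UNIV - A = (\<Union>N. H N)" using inF inH disj by blast
  show ?thesis unfolding Delta02_def gdelta_in_fsigma_in
    using fsigma_UN[of F, OF Fc] fsigma_UN[of H, OF Hc] A1 A2 by simp
qed

lemma Tc_ran: "T_clopen A \<Longrightarrow> A \<in> ran_Phi"
proof -
  assume T: "T_clopen A"
  then have "Phi A = A" "A \<in> sets mu" unfolding T_clopen_def by auto
  then show ?thesis unfolding ran_Phi_def by force
qed

lemma dens_sub: "cyl x n \<subseteq> S \<Longrightarrow> dens_seq S x n = 1"
proof -
  assume "cyl x n \<subseteq> S"
  then have "S \<inter> cyl x n = cyl x n" by auto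
  then show ?thesis using cyl_pos[of x n] by (simp add: dens_seq_def)
qed

lemma dens_disj: "cyl x n \<inter> S = {} \<Longrightarrow> dens_seq S x n = 0"
proof -
  assume "cyl x n \<inter> S = {}"
  then have "S \<inter> cyl x n = {}" by auto
  then show ?thesis by (simp add: dens_seq_def)
qed

definition P0 :: "nat \<Rightarrow> (nat \<Rightarrow> bool) set" where
  "P0 k = {y. (\<forall>i<k. \<not> y i) \<and> y k \<and> \<not> y (Suc k)}"

definition B0 :: "(nat \<Rightarrow> bool) set" where
  "B0 = (\<Union>k. P0 k)"

lemma P0_dep: "fin_dep (Suc (Suc k)) (P0 k)"
  unfolding fin_dep_def
proof (intro allI impI)
  fix x y :: "nat \<Rightarrow> bool" assume h: "\<forall>i<Suc (Suc k). x i = y i"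
  have a: "(\<forall>i<k. \<not> x i) \<longleftrightarrow> (\<forall>i<k. \<not> y i)" using h by simp
  have b: "x k = y k" "x (Suc k) = y (Suc k)" using h by simp_all
  show "x \<in> P0 k \<longleftrightarrow> y \<in> P0 k" unfolding P0_def using a b by simp
qed

lemma B0_sets: "B0 \<in> sets mu"
proof -
  have "range P0 \<subseteq> sets mu" using fin_dep_sets[OF P0_dep] by blast
  then show ?thesis unfolding B0_def by (rule sets.countable_nat_UN)
qed

lemma B0_Delta: "Delta02 B0"
proof -
  have "open B0" unfolding B0_def using fin_dep_open[OF P0_dep] by (intro open_UN ballI)
  then have "gdelta_in euclidean B0" by (rule open_imp_gdelta_in[OF open_openin[THEN iffD1]])
  moreover have "fsigma_in euclidean B0" unfolding B0_def
    by (rule fsigma_UN[OF fin_dep_closed[OF P0_dep]])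
  ultimately show ?thesis by (simp add: Delta02_def)
qed

definition z0 :: "nat \<Rightarrow> bool" where "z0 = (\<lambda>_. False)"

lemma z0_bounds: "1/4 \<le> dens_seq B0 z0 n \<and> dens_seq B0 z0 n \<le> 3/4"
proof -
  define Q where "Q = cyl (z0(n := True, Suc n := True)) (Suc (Suc n))"
  define Q' where "Q' = cyl (z0(n := True)) (Suc (Suc n))"
  have mQ: "measure mu Q = 1/4 * (1/2)^n" unfolding Q_def cyl_measure by simp
  have mQ': "measure mu Q' = 1/4 * (1/2)^n" unfolding Q'_def cyl_measure by simp
  have mC: "measure mu (cyl z0 n) = (1/2)^n" by (rule cyl_measure)
  have Q'sub: "Q' \<subseteq> B0 \<inter> cyl z0 n"
  proof
    fix y assume "y \<in> Q'"
    then have y: "\<forall>i<Suc (Suc n). y i = (z0(n := True)) i" by (simp add: Q'_def cyl_def)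
    have ylt: "\<forall>i<n. \<not> y i"
    proof (intro allI impI)
      fix i assume "i < n"
      then have "y i = (z0(n := True)) i" using y by simp
      then show "\<not> y i" using \<open>i < n\<close> by (simp add: z0_def)
    qed
    have yn: "y n" using y[rule_format, of n] by simp
    have ysn: "\<not> y (Suc n)" using y[rule_format, of "Suc n"] by (simp add: z0_def)
    have "y \<in> P0 n" unfolding P0_def using ylt yn ysn by simp
    moreover have "y \<in> cyl z0 n" using ylt unfolding cyl_def z0_def by simp
    ultimately show "y \<in> B0 \<inter> cyl z0 n" unfolding B0_def by auto
  qed
  have Qsub: "Q \<subseteq> cyl z0 n"
  proof
    fix y assume "y \<in> Q"
    then have y: "\<forall>i<Suc (Suc n). y i = (z0(n := True, Suc n := True)) i" by (simp add: Q_def cyl_def)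
    have "\<forall>i<n. y i = z0 i"
    proof (intro allI impI)
      fix i assume "i < n"
      then show "y i = z0 i" using y[rule_format, of i] by simp
    qed
    then show "y \<in> cyl z0 n" by (simp add: cyl_def)
  qed
  have QB: "Q \<inter> B0 = {}"
  proof -
    { fix y k assume yQ: "y \<in> Q" and yP: "y \<in> P0 k"
      have y: "\<forall>i<Suc (Suc n). y i = (z0(n := True, Suc n := True)) i" using yQ by (simp add: Q_def cyl_def)
      have ylt: "\<forall>i<n. \<not> y i"
      proof (intro allI impI)
        fix i assume "i < n"
        then have "y i = (z0(n := True, Suc n := True)) i" using y by simp
        then show "\<not> y i" using \<open>i < n\<close> by (simp add: z0_def)
      qed
      have yn: "y n" using y[rule_format, of n] by simp
      have ysn: "y (Suc n)" using y[rule_format, of "Suc n"] by simp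
      have P: "\<forall>i<k. \<not> y i" "y k" "\<not> y (Suc k)" using yP unfolding P0_def by auto
      have False
      proof (cases k n rule: linorder_cases)
        case less then show False using ylt P(2) by blast
      next
        case equal then show False using ysn P(3) by simp
      next
        case greater then show False using P(1) yn by blast
      qed }
    then show ?thesis unfolding B0_def by blast
  qed
  have Qs: "Q \<in> sets mu" "Q' \<in> sets mu" unfolding Q_def Q'_def by auto
  have "measure mu Q' \<le> measure mu (B0 \<inter> cyl z0 n)"
    using Q'sub Qs B0_sets by (intro mu.finite_measure_mono) auto
  then have lo: "1/4 \<le> dens_seq B0 z0 n" unfolding dens_seq_def mQ' mC by (simp add: field_simps)
  have "B0 \<inter> cyl z0 n \<subseteq> cyl z0 n - Q" using QB by auto
  then have "measure mu (B0 \<inter> cyl z0 n) \<le> measure mu (cyl z0 n - Q)"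
    using Qs B0_sets by (intro mu.finite_measure_mono) auto
  also have "\<dots> = measure mu (cyl z0 n) - measure mu Q"
    using Qs Qsub by (intro mu.finite_measure_Diff) auto
  finally have hi: "dens_seq B0 z0 n \<le> 3/4" unfolding dens_seq_def mQ mC by (simp add: field_simps)
  show ?thesis using lo hi by simp
qed

lemma z0_notB0: "z0 \<notin> B0"
  unfolding B0_def P0_def z0_def by auto

lemma B0_Phi: "Phi B0 = B0"
proof (rule set_eqI)
  fix x
  show "x \<in> Phi B0 \<longleftrightarrow> x \<in> B0"
  proof (cases "x \<in> B0")
    case True
    then obtain k where k: "x \<in> P0 k" unfolding B0_def by auto
    have "eventually (\<lambda>n. dens_seq B0 x n = 1) sequentially"
      unfolding eventually_sequentially
    proof (intro exI allI impI)
      fix n assume "Suc (Suc k) \<le> n"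
      then have "cyl x n \<subseteq> P0 k" using fin_dep_cyl_sub[OF P0_dep k] by blast
      then show "dens_seq B0 x n = 1" by (intro dens_sub) (auto simp: B0_def)
    qed
    then have "dens_seq B0 x \<longlonglongrightarrow> 1" by (rule tendsto_eventually)
    then show ?thesis using True by (simp add: Phi_def has_density_def)
  next
    case False
    have "\<not> dens_seq B0 x \<longlonglongrightarrow> 1"
    proof (cases "\<exists>i. x i")
      case True
      define k where "k = (LEAST i. x i)"
      have xk: "x k" unfolding k_def using True by (rule LeastI_ex)
      have xlt: "\<forall>i<k. \<not> x i" unfolding k_def using not_less_Least by blast
      have xk1: "x (Suc k)" using False xlt xk unfolding B0_def P0_def by auto
      have "eventually (\<lambda>n. dens_seq B0 x n = 0) sequentially"
        unfolding eventually_sequentially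
      proof (intro exI allI impI)
        fix n assume n: "Suc (Suc k) \<le> n"
        have "cyl x n \<inter> B0 = {}"
        proof -
          { fix y j assume yc: "y \<in> cyl x n" and yP: "y \<in> P0 j"
            have y: "\<forall>i<n. y i = x i" using yc by (auto simp: cyl_def)
            have yk: "y k = x k" using y n by simp
            have ysk: "y (Suc k) = x (Suc k)" using y n by simp
            have P: "\<forall>i<j. \<not> y i" "y j" "\<not> y (Suc j)" using yP unfolding P0_def by auto
            have False
            proof (cases j k rule: linorder_cases)
              case less
              then have "y j = x j" using y n by simp
              then show False using P(2) xlt less by blast
            next
              case equal then show False using P(3) ysk xk1 by simp
            next
              case greater then show False using P(1) yk xk by blast
            qed }
          then show ?thesis unfolding B0_def by blast
        qed
        then show "dens_seq B0 x n = 0" by (rule dens_disj)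
      qed
      then have "dens_seq B0 x \<longlonglongrightarrow> 0" by (rule tendsto_eventually)
      then show ?thesis using LIMSEQ_unique by fastforce
    next
      case False
      then have "x = z0" unfolding z0_def by auto
      show ?thesis
      proof
        assume "dens_seq B0 x \<longlonglongrightarrow> 1"
        then have "1 \<le> (3/4::real)"
          using z0_bounds \<open>x = z0\<close> by (intro LIMSEQ_le_const2[of "dens_seq B0 x"]) auto
        then show False by simp
      qed
    qed
    then show ?thesis using False by (simp add: Phi_def has_density_def)
  qed
qed

lemma B0_not_Tc: "\<not> T_clopen B0"
proof
  assume "T_clopen B0"
  then have "Phi (- B0) = - B0" by (simp add: T_clopen_def)
  then have "z0 \<in> Phi (- B0)" using z0_notB0 by auto
  then have "(\<lambda>n. 1 - dens_seq B0 z0 n) \<longlonglongrightarrow> 1"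
    by (simp add: Phi_def has_density_def dens_compl_fun[OF B0_sets])
  then have "1 \<le> (3/4::real)"
    using z0_bounds by (intro LIMSEQ_le_const2[of "\<lambda>n. 1 - dens_seq B0 z0 n"]) (auto simp: algebra_simps)
  then show False by simp
qed

theorem corollary5p4:
  shows "(\<forall>A. (T_clopen A \<longleftrightarrow> (\<exists>B. dualistic B \<and> A = Phi B))
            \<and> ((\<exists>B. dualistic B \<and> A = Phi B) \<longleftrightarrow> (A \<in> ran_Phi \<and> dualistic A)))
         \<and> {A. T_clopen A} \<subset> ran_Phi \<inter> {A. Delta02 A}"
proof (rule conjI)
  show "\<forall>A. (T_clopen A \<longleftrightarrow> (\<exists>B. dualistic B \<and> A = Phi B))
            \<and> ((\<exists>B. dualistic B \<and> A = Phi B) \<longleftrightarrow> (A \<in> ran_Phi \<and> dualistic A))"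
    using part1 by blast
next
  show "{A. T_clopen A} \<subset> ran_Phi \<inter> {A. Delta02 A}"
  proof (rule psubsetI)
    show "{A. T_clopen A} \<subseteq> ran_Phi \<inter> {A. Delta02 A}" using Tc_ran Tc_Delta by blast
  next
    have "B0 \<in> ran_Phi" unfolding ran_Phi_def using B0_Phi B0_sets by force
    then have "B0 \<in> ran_Phi \<inter> {A. Delta02 A}" using B0_Delta by simp
    moreover have "B0 \<notin> {A. T_clopen A}" using B0_not_Tc by simp
    ultimately show "{A. T_clopen A} \<noteq> ran_Phi \<inter> {A. Delta02 A}" by blast
  qed
qed

end
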